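(* Let $h_1,h_2$ be half-spaces of a finite dimensional CAT(0) cube complex with $h_1\subsetneq h_2^*$. Then $\beta(h_1,h_2)$ is consistent (i.e. $\beta\cap\beta^*=\varnothing$, and $h\in\beta$, $h\subset k$ imply $k\in\beta$) and satisfies the descending chain condition (every descending chain in $\beta(h_1,h_2)$ is eventually constant).
   Context: $X$ is a finite-dimensional CAT(0) cube complex identified with its vertex set, $\mathfrak H$ its set of half-spaces, $h^*=X\setminus h$, $\mathfrak s^*=\{h^*:h\in\mathfrak s\}$. Half-spaces $h,k$ are transverse ($h\pitchfork k$) if $h\cap k,h\cap k^*,h^*\cap k,h^*\cap k^*$ are all nonempty. Write $\hat a\subset b$ if $a\subsetneq b$ or $a^*\subsetneq b$. For $h_1\subsetneq h_2^*$, $\beta(h_1,h_2)$ is the set of $h\in\mathfrak H$ satisfying one of: (1) $\hat h_1\subset h$ and $h\pitchfork h_2$; (2) $\hat h_2\subset h$ and $h\pitchfork h_1$; (3) $\hat h_1\subset h$ and $\hat h_2\subset h$. *)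

theory Defs
  imports Main
begin

text \<open>A CAT(0) cube complex is identified with its vertex set V; its 1-skeleton is a
median graph (Chepoi/Roller), given by a simple graph relation E on V.\<close>

inductive walk :: "'a set \<Rightarrow> ('a \<Rightarrow> 'a \<Rightarrow> bool) \<Rightarrow> nat \<Rightarrow> 'a \<Rightarrow> 'a \<Rightarrow> bool"
  for V E where
  walk_refl: "x \<in> V \<Longrightarrow> walk V E 0 x x"
| walk_step: "x \<in> V \<Longrightarrow> E x y \<Longrightarrow> walk V E n y z \<Longrightarrow> walk V E (Suc n) x z"

definition gdist :: "'a set \<Rightarrow> ('a \<Rightarrow> 'a \<Rightarrow> bool) \<Rightarrow> 'a \<Rightarrow> 'a \<Rightarrow> nat" where
  "gdist V E x y = (LEAST n. walk V E n x y)"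

definition interval :: "'a set \<Rightarrow> ('a \<Rightarrow> 'a \<Rightarrow> bool) \<Rightarrow> 'a \<Rightarrow> 'a \<Rightarrow> 'a set" where
  "interval V E x y = {z \<in> V. gdist V E x z + gdist V E z y = gdist V E x y}"

definition median_graph :: "'a set \<Rightarrow> ('a \<Rightarrow> 'a \<Rightarrow> bool) \<Rightarrow> bool" where
  "median_graph V E \<longleftrightarrow>
     (\<forall>x y. E x y \<longrightarrow> x \<in> V \<and> y \<in> V) \<and>
     (\<forall>x. \<not> E x x) \<and> (\<forall>x y. E x y \<longrightarrow> E y x) \<and>
     (\<forall>x\<in>V. \<forall>y\<in>V. \<exists>n. walk V E n x y) \<and>
     (\<forall>x\<in>V. \<forall>y\<in>V. \<forall>z\<in>V. \<exists>!m. m \<in> interval V E x y \<inter> interval V E y z \<inter> interval V E x z)"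

definition gconvex :: "'a set \<Rightarrow> ('a \<Rightarrow> 'a \<Rightarrow> bool) \<Rightarrow> 'a set \<Rightarrow> bool" where
  "gconvex V E S \<longleftrightarrow> S \<subseteq> V \<and> (\<forall>x\<in>S. \<forall>y\<in>S. interval V E x y \<subseteq> S)"

definition halfspaces :: "'a set \<Rightarrow> ('a \<Rightarrow> 'a \<Rightarrow> bool) \<Rightarrow> 'a set set" where
  "halfspaces V E = {h. h \<noteq> {} \<and> h \<noteq> V \<and> gconvex V E h \<and> gconvex V E (V - h)}"

definition transverse :: "'a set \<Rightarrow> 'a set \<Rightarrow> 'a set \<Rightarrow> bool" where
  "transverse V h k \<longleftrightarrow> h \<inter> k \<noteq> {} \<and> h \<inter> (V - k) \<noteq> {} \<and> (V - h) \<inter> k \<noteq> {}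
      \<and> (V - h) \<inter> (V - k) \<noteq> {}"

definition finite_dim :: "'a set \<Rightarrow> ('a \<Rightarrow> 'a \<Rightarrow> bool) \<Rightarrow> bool" where
  "finite_dim V E \<longleftrightarrow> (\<exists>N::nat. \<forall>F. F \<subseteq> halfspaces V E \<and> finite F \<and>
      (\<forall>h\<in>F. \<forall>k\<in>F. h \<noteq> k \<longrightarrow> transverse V h k) \<longrightarrow> card F \<le> N)"

definition cat0_cube_complex :: "'a set \<Rightarrow> ('a \<Rightarrow> 'a \<Rightarrow> bool) \<Rightarrow> bool" where
  "cat0_cube_complex V E \<longleftrightarrow> median_graph V E \<and> finite_dim V E"

definition hatsub :: "'a set \<Rightarrow> 'a set \<Rightarrow> 'a set \<Rightarrow> bool" where
  "hatsub V a b \<longleftrightarrow> a \<subset> b \<or> (V - a) \<subset> b"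

definition beta :: "'a set \<Rightarrow> ('a \<Rightarrow> 'a \<Rightarrow> bool) \<Rightarrow> 'a set \<Rightarrow> 'a set \<Rightarrow> 'a set set" where
  "beta V E h1 h2 = {h \<in> halfspaces V E.
      (hatsub V h1 h \<and> transverse V h h2) \<or>
      (hatsub V h2 h \<and> transverse V h h1) \<or>
      (hatsub V h1 h \<and> hatsub V h2 h)}"

definition consistent :: "'a set \<Rightarrow> ('a \<Rightarrow> 'a \<Rightarrow> bool) \<Rightarrow> 'a set set \<Rightarrow> bool" where
  "consistent V E \<beta> \<longleftrightarrow> \<beta> \<inter> ((\<lambda>h. V - h) ` \<beta>) = {} \<and>
     (\<forall>h\<in>\<beta>. \<forall>k\<in>halfspaces V E. h \<subseteq> k \<longrightarrow> k \<in> \<beta>)"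

definition dcc :: "'a set set \<Rightarrow> bool" where
  "dcc \<beta> \<longleftrightarrow> (\<forall>f::nat \<Rightarrow> 'a set. (\<forall>n. f n \<in> \<beta>) \<and> (\<forall>n. f (Suc n) \<subseteq> f n) \<longrightarrow>
      (\<exists>N. \<forall>n\<ge>N. f n = f N))"

end

theory Submission
  imports Defs "HOL-Library.Infinite_Set"
begin

lemma hs_sub: "h \<in> halfspaces V E \<Longrightarrow> h \<subseteq> V \<and> h \<noteq> {} \<and> V - h \<noteq> {}"
  unfolding halfspaces_def gconvex_def by blast

lemma hat_both: "hatsub V a h \<Longrightarrow> hatsub V a (V - h) \<Longrightarrow> a \<noteq> {} \<Longrightarrow> a \<subseteq> V
   \<Longrightarrow> V - a \<noteq> {} \<Longrightarrow> h \<subseteq> V \<Longrightarrow> False"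
  unfolding hatsub_def by blast

lemma hat_ntr: "hatsub V a h \<Longrightarrow> a \<subseteq> V \<Longrightarrow> h \<subseteq> V \<Longrightarrow> \<not> transverse V h a"
  unfolding hatsub_def transverse_def by blast

lemma tr_comp: "h \<subseteq> V \<Longrightarrow> a \<subseteq> V \<Longrightarrow> transverse V (V - h) a = transverse V h a"
  unfolding transverse_def by (auto simp: Int_commute Diff_Diff_Int Int_absorb1)

lemma beta_disj:
  assumes h1: "h1 \<in> halfspaces V E" and h2: "h2 \<in> halfspaces V E"
    and a: "h \<in> beta V E h1 h2" and b: "V - h \<in> beta V E h1 h2"
  shows False
proof -
  have hV: "h \<subseteq> V" using a hs_sub unfolding beta_def by blast
  note s1 = hs_sub[OF h1] and s2 = hs_sub[OF h2]
  have tc1: "transverse V (V - h) h1 = transverse V h h1" using tr_comp hV s1 by blast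
  have tc2: "transverse V (V - h) h2 = transverse V h h2" using tr_comp hV s2 by blast
  have hc: "V - h \<subseteq> V" by blast
  from a b show False unfolding beta_def
    using hat_both[of V h1 h] hat_both[of V h2 h] hat_ntr[of V h1 h] hat_ntr[of V h2 h]
      hat_ntr[of V h1 "V-h"] hat_ntr[of V h2 "V-h"] s1 s2 hV hc tc1 tc2 by blast
qed

lemma hat_mono: "hatsub V a h \<Longrightarrow> h \<subseteq> k \<Longrightarrow> k \<subseteq> V \<Longrightarrow> hatsub V a k"
  unfolding hatsub_def by blast

lemma tr_up:
  assumes "transverse V h a" "h \<subset> k" "k \<subseteq> V" "a \<subseteq> V" "V - k \<noteq> {}"
  shows "transverse V k a \<or> hatsub V a k"
  using assms unfolding transverse_def hatsub_def by blast

lemma beta_up: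
  assumes "h \<in> beta V E h1 h2" "k \<in> halfspaces V E" "h \<subseteq> k"
    and h1: "h1 \<in> halfspaces V E" and h2: "h2 \<in> halfspaces V E"
  shows "k \<in> beta V E h1 h2"
proof (cases "h = k")
  case True then show ?thesis using assms by simp
next
  case False
  then have hk: "h \<subset> k" using assms by blast
  have k: "k \<subseteq> V" "V - k \<noteq> {}" using hs_sub[OF assms(2)] by auto
  note s1 = hs_sub[OF h1] and s2 = hs_sub[OF h2]
  show ?thesis using assms(1) assms(2) unfolding beta_def
    using hat_mono[of V h1 h k] hat_mono[of V h2 h k] tr_up[of V h h1 k] tr_up[of V h h2 k]
      hk k s1 s2 by blast
qed

lemma walk_0: "walk V E 0 x y \<Longrightarrow> x = y"
  by (erule walk.cases) auto

lemma walk_in: "walk V E n x y \<Longrightarrow> x \<in> V"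
  by (erule walk.cases) auto

lemma gdist_walk:
  assumes "median_graph V E" "x \<in> V" "y \<in> V"
  shows "walk V E (gdist V E x y) x y"
proof -
  obtain n where "walk V E n x y" using assms unfolding median_graph_def by blast
  then show ?thesis unfolding gdist_def by (rule LeastI)
qed

lemma gdist_0:
  assumes "median_graph V E" "x \<in> V" "y \<in> V" "gdist V E x y = 0"
  shows "x = y"
  using gdist_walk[OF assms(1-3)] assms(4) walk_0 by metis

lemma interval_edge:
  assumes mg: "median_graph V E" and e: "E u v" and m: "m \<in> interval V E u v"
  shows "m = u \<or> m = v"
proof -
  have uv: "u \<in> V" "v \<in> V" using mg e unfolding median_graph_def by auto
  have mV: "m \<in> V" using m unfolding interval_def by auto
  have w1: "walk V E 1 u v" using uv e by (auto intro: walk.intros)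
  have "gdist V E u v \<le> 1" unfolding gdist_def using w1 by (rule Least_le)
  then have "gdist V E u m = 0 \<or> gdist V E m v = 0" using m unfolding interval_def by auto
  then show ?thesis using gdist_0[OF mg] uv mV by blast
qed

lemma cut_unique:
  assumes mg: "median_graph V E" and e: "E u v"
    and h: "h \<in> halfspaces V E" and h': "h' \<in> halfspaces V E"
    and "u \<in> h" "u \<in> h'" "v \<notin> h" "v \<notin> h'"
  shows "h \<subseteq> h'"
proof
  fix z assume z: "z \<in> h"
  show "z \<in> h'"
  proof (rule ccontr)
    assume nz: "z \<notin> h'"
    have uv: "u \<in> V" "v \<in> V" using mg e unfolding median_graph_def by auto
    have zV: "z \<in> V" using z hs_sub[OF h] by auto
    obtain m where m: "m \<in> interval V E z u \<inter> interval V E u v \<inter> interval V E z v"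
      using mg zV uv unfolding median_graph_def by blast
    have "m \<in> h" using m z \<open>u \<in> h\<close> h unfolding halfspaces_def gconvex_def by blast
    moreover have "m \<in> V - h'" using m zV nz uv \<open>v \<notin> h'\<close> h' unfolding halfspaces_def gconvex_def
      by blast
    moreover have "m = u \<or> m = v" using interval_edge[OF mg e] m by blast
    ultimately show False using assms by blast
  qed
qed

lemma sep_finite:
  assumes mg: "median_graph V E" and w: "walk V E n x y"
  shows "finite {h \<in> halfspaces V E. x \<in> h \<and> y \<notin> h}"
  using w
proof (induction rule: walk.induct)
  case (walk_refl x) then show ?case by simp
next
  case (walk_step x w n z)
  have sub: "{h \<in> halfspaces V E. x \<in> h \<and> z \<notin> h} \<subseteq>
     {h \<in> halfspaces V E. w \<in> h \<and> z \<notin> h} \<union> {h \<in> halfspaces V E. x \<in> h \<and> w \<notin> h}"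
    by blast
  have "finite {h \<in> halfspaces V E. x \<in> h \<and> w \<notin> h}"
  proof (cases "{h \<in> halfspaces V E. x \<in> h \<and> w \<notin> h} = {}")
    case True then show ?thesis by (metis finite.emptyI)
  next
    case False
    then obtain h0 where h0: "h0 \<in> halfspaces V E" "x \<in> h0" "w \<notin> h0" by blast
    have "{h \<in> halfspaces V E. x \<in> h \<and> w \<notin> h} \<subseteq> {h0}"
      using cut_unique[OF mg walk_step.hyps(2)] h0 by blast
    then show ?thesis using finite_subset by blast
  qed
  then show ?case using walk_step.IH sub finite_subset by blast
qed

lemma sep_finite': "median_graph V E \<Longrightarrow> x \<in> V \<Longrightarrow> y \<in> V
  \<Longrightarrow> finite {h \<in> halfspaces V E. x \<in> h \<and> y \<notin> h}"
  using sep_finite gdist_walk by metis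

lemma beta_dcc:
  assumes mg: "median_graph V E"
    and h1: "h1 \<in> halfspaces V E" and h2: "h2 \<in> halfspaces V E"
  shows "dcc (beta V E h1 h2)"
  unfolding dcc_def
proof (intro allI impI)
  fix f :: "nat \<Rightarrow> 'a set"
  assume "(\<forall>n. f n \<in> beta V E h1 h2) \<and> (\<forall>n. f (Suc n) \<subseteq> f n)"
  then have fb: "\<And>n. f n \<in> beta V E h1 h2" and fs: "\<And>n. f (Suc n) \<subseteq> f n" by auto
  have anti: "\<And>m n. m \<le> n \<Longrightarrow> f n \<subseteq> f m"
    using lift_Suc_antimono_le[of f, OF fs] by blast
  have fh: "\<And>n. f n \<in> halfspaces V E" using fb unfolding beta_def by blast
  obtain y where y: "y \<in> V" "y \<notin> f 0" using hs_sub[OF fh[of 0]] by blast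
  note s1 = hs_sub[OF h1] and s2 = hs_sub[OF h2]
  obtain x1 where x1: "x1 \<in> h1" using s1 by blast
  obtain x2 where x2: "x2 \<in> h2" using s2 by blast
  obtain x3 where x3: "x3 \<in> V - h1" using s1 by blast
  obtain x4 where x4: "x4 \<in> V - h2" using s2 by blast
  let ?S = "\<lambda>x. {h \<in> halfspaces V E. x \<in> h \<and> y \<notin> h}"
  have rng: "range f \<subseteq> ?S x1 \<union> ?S x2 \<union> ?S x3 \<union> ?S x4"
  proof
    fix k assume "k \<in> range f"
    then obtain n where k: "k = f n" by blast
    have "y \<notin> k" using anti[of 0 n] y k by auto
    moreover have "hatsub V h1 k \<or> hatsub V h2 k" using fb[of n] k unfolding beta_def by blast
    ultimately show "k \<in> ?S x1 \<union> ?S x2 \<union> ?S x3 \<union> ?S x4"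
      using fh[of n] k x1 x2 x3 x4 unfolding hatsub_def by blast
  qed
  have xs: "x1 \<in> V" "x2 \<in> V" "x3 \<in> V" "x4 \<in> V" using x1 x2 x3 x4 s1 s2 by auto
  have "finite (range f)"
    using rng sep_finite'[OF mg _ y(1)] xs by (meson finite_Un finite_subset)
  then obtain A where A: "infinite {n. f n = A}"
    using inf_img_fin_dom[of f UNIV] unfolding vimage_def by auto
  then obtain N where N: "f N = A"
    using not_finite_existsD by blast
  have "\<forall>n\<ge>N. f n = f N"
  proof (intro allI impI)
    fix n assume "N \<le> n"
    obtain m where m: "m \<ge> n" "f m = A"
      using A unfolding infinite_nat_iff_unbounded_le by blast
    show "f n = f N" using anti[OF \<open>N \<le> n\<close>] anti[OF m(1)] m N by blast
  qed
  then show "\<exists>N. \<forall>n\<ge>N. f n = f N" by blast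
qed

theorem lemma3:
  fixes V :: "'a set" and E :: "'a \<Rightarrow> 'a \<Rightarrow> bool" and h1 h2 :: "'a set"
  assumes "cat0_cube_complex V E"
    and "h1 \<in> halfspaces V E" and "h2 \<in> halfspaces V E"
    and "h1 \<subset> V - h2"
  shows "consistent V E (beta V E h1 h2) \<and> dcc (beta V E h1 h2)"
proof
  have mg: "median_graph V E" using assms(1) unfolding cat0_cube_complex_def by blast
  show "dcc (beta V E h1 h2)" using beta_dcc[OF mg assms(2,3)] .
  show "consistent V E (beta V E h1 h2)"
    unfolding consistent_def
    using beta_disj[OF assms(2,3)] beta_up[OF _ _ _ assms(2,3)] by blast
qed

end
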